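(* For all $g,b,n\ge0$ the inverse mapping class monoid $\mathcal{IM}_{g,b,n}$ is an inverse monoid, i.e. for every $a\in\mathcal{IM}_{g,b,n}$ there is a unique $c\in\mathcal{IM}_{g,b,n}$ with $aca=a$ and $cac=c$.
   Context: Let $S_{g,b}$ be a compact orientable surface of genus $g$ with $b$ boundary components, and $Q_n$ a fixed set of $n$ interior points. Consider homeomorphisms $f$ of $S_{g,b}$ (fixing the boundary pointwise) together with a subset $\{i_1,\dots,i_k\}\subseteq Q_n$, $0\le k\le n$, that $f$ maps bijectively onto a subset $\{j_1,\dots,j_k\}\subseteq Q_n$. If $h$ maps $\{s_1,\dots,s_l\}\subseteq Q_n$ bijectively onto $\{t_1,\dots,t_l\}\subseteq Q_n$, the composite $h\circ f$ is equipped with the set of those $i_r$ with $f(i_r)\in\{s_1,\dots,s_l\}$ (possibly empty), which it maps bijectively into $Q_n$. The set of isotopy classes of such maps, with this composition, is a monoid denoted $\mathcal{IM}_{g,b,n}$, the inverse mapping class monoid. For $g=0,b=1$ it is the inverse braid monoid. *)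

theory Defs
  imports "HOL-Homology.Homology" "HOL-Algebra.Free_Abelian_Groups" "HOL-Algebra.Elementary_Groups"
begin

text \<open>Closed upper half-plane, the local model of a 2-manifold with boundary.\<close>
definition half_plane :: "(real \<times> real) set" where
  "half_plane = {p. snd p \<ge> 0}"

definition mfd_interior :: "'a topology \<Rightarrow> 'a set" where
  "mfd_interior X = {x \<in> topspace X. \<exists>U V. openin X U \<and> x \<in> U \<and> open (V :: (real \<times> real) set)
       \<and> subtopology X U homeomorphic_space top_of_set V}"

definition mfd_boundary :: "'a topology \<Rightarrow> 'a set" where
  "mfd_boundary X = topspace X - mfd_interior X"

definition surface_with_boundary :: "'a topology \<Rightarrow> bool" where
  "surface_with_boundary X \<longleftrightarrow> Hausdorff_space X \<and>
     (\<forall>x\<in>topspace X. \<exists>U V. openin X U \<and> x \<in> U \<and> openin (top_of_set half_plane) V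
        \<and> subtopology X U homeomorphic_space top_of_set V)"

text \<open>Orientability of a compact connected surface is expressed by
  H_2(X, boundary X; Z) = Z, and the genus via H_1(X; Z) = Z^(2g + max b 1 - 1);
  by the classification of compact surfaces this determines S_{g,b} up to homeomorphism.\<close>
definition is_surface :: "nat \<Rightarrow> nat \<Rightarrow> 'a topology \<Rightarrow> bool" where
  "is_surface g b X \<longleftrightarrow> surface_with_boundary X \<and> compact_space X \<and> connected_space X
     \<and> finite (connected_components_of (subtopology X (mfd_boundary X)))
     \<and> card (connected_components_of (subtopology X (mfd_boundary X))) = b
     \<and> relative_homology_group 2 X (mfd_boundary X) \<cong> integer_group
     \<and> homology_group 1 X \<cong> free_Abelian_group {..< 2 * g + max b 1 - 1}"

text \<open>Representatives: a homeomorphism f of X fixing the boundary pointwise, together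
  with a subset D of Q that f maps (bijectively, f being injective) into Q.\<close>
definition IM_reps :: "'a topology \<Rightarrow> 'a set \<Rightarrow> (('a \<Rightarrow> 'a) \<times> 'a set) set" where
  "IM_reps X Q = {(f, D). homeomorphic_map X X f \<and> (\<forall>x\<in>mfd_boundary X. f x = x)
                          \<and> D \<subseteq> Q \<and> f ` D \<subseteq> Q}"

definition IM_isotopic :: "'a topology \<Rightarrow> ('a \<Rightarrow> 'a) \<times> 'a set \<Rightarrow> ('a \<Rightarrow> 'a) \<times> 'a set \<Rightarrow> bool" where
  "IM_isotopic X p q \<longleftrightarrow> snd p = snd q \<and>
     (\<exists>H. continuous_map (prod_topology (top_of_set {0..1::real}) X) X H
        \<and> (\<forall>t\<in>{0..1}. homeomorphic_map X X (\<lambda>x. H (t, x))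
              \<and> (\<forall>x\<in>mfd_boundary X. H (t, x) = x)
              \<and> (\<forall>d\<in>snd p. H (t, d) = fst p d))
        \<and> (\<forall>x\<in>topspace X. H (0, x) = fst p x \<and> H (1, x) = fst q x))"

definition IM_class :: "'a topology \<Rightarrow> 'a set \<Rightarrow> ('a \<Rightarrow> 'a) \<times> 'a set \<Rightarrow> (('a \<Rightarrow> 'a) \<times> 'a set) set" where
  "IM_class X Q p = {q \<in> IM_reps X Q. IM_isotopic X p q}"

definition IM_comp :: "('a \<Rightarrow> 'a) \<times> 'a set \<Rightarrow> ('a \<Rightarrow> 'a) \<times> 'a set \<Rightarrow> ('a \<Rightarrow> 'a) \<times> 'a set" where
  "IM_comp hS fD = (fst hS \<circ> fst fD, {d \<in> snd fD. fst fD d \<in> snd hS})"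

definition IM :: "'a topology \<Rightarrow> 'a set \<Rightarrow> (('a \<Rightarrow> 'a) \<times> 'a set) set monoid" where
  "IM X Q = \<lparr> carrier = IM_class X Q ` IM_reps X Q,
              monoid.mult = (\<lambda>A B. IM_class X Q (IM_comp (SOME p. p \<in> A) (SOME q. q \<in> B))),
              one = IM_class X Q (\<lambda>x. x, Q) \<rparr>"

end

theory Submission
  imports Defs
begin

definition PP :: "'a topology \<Rightarrow> ('a \<Rightarrow> 'a) \<times> 'a set \<Rightarrow> ('a \<Rightarrow> 'a) \<Rightarrow> bool" where
  "PP X p k \<longleftrightarrow> homeomorphic_map X X k \<and> (\<forall>x\<in>mfd_boundary X. k x = x) \<and> (\<forall>d\<in>snd p. k d = fst p d)"

lemma bdry_sub: "mfd_boundary X \<subseteq> topspace X"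
  by (auto simp: mfd_boundary_def)

lemma PP_inv:
  assumes "snd p \<subseteq> topspace X" "\<And>x. x \<in> topspace X \<Longrightarrow> h x = k x"
  shows "PP X p h \<longleftrightarrow> PP X p k"
proof -
  have "homeomorphic_map X X h \<longleftrightarrow> homeomorphic_map X X k"
    using assms(2) homeomorphic_map_eq by metis
  moreover have "(\<forall>x\<in>mfd_boundary X. h x = x) \<longleftrightarrow> (\<forall>x\<in>mfd_boundary X. k x = x)"
    using assms(2) bdry_sub by (metis subsetD)
  moreover have "(\<forall>d\<in>snd p. h d = fst p d) \<longleftrightarrow> (\<forall>d\<in>snd p. k d = fst p d)"
    using assms by (metis subsetD)
  ultimately show ?thesis unfolding PP_def by simp
qed

lemma iso_iff:
  assumes "snd p \<subseteq> topspace X"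
  shows "IM_isotopic X p q \<longleftrightarrow> snd p = snd q \<and> homotopic_with (PP X p) X X (fst p) (fst q)"
proof -
  have "homotopic_with (PP X p) X X (fst p) (fst q) \<longleftrightarrow>
     (\<exists>h. continuous_map (prod_topology (subtopology euclideanreal {0..1}) X) X h \<and>
              (\<forall>x \<in> topspace X. h(0,x) = fst p x) \<and>
              (\<forall>x \<in> topspace X. h(1,x) = fst q x) \<and>
              (\<forall>t \<in> {0..1}. PP X p (\<lambda>x. h(t,x))))"
    by (rule homotopic_with) (rule PP_inv[OF assms])
  then show ?thesis unfolding IM_isotopic_def PP_def by auto
qed

lemma reps_D:
  assumes "p \<in> IM_reps X Q" "Q \<subseteq> topspace X"
  shows "homeomorphic_map X X (fst p)" "\<forall>x\<in>mfd_boundary X. fst p x = x"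
    "snd p \<subseteq> Q" "fst p ` snd p \<subseteq> Q" "snd p \<subseteq> topspace X"
  using assms by (auto simp: IM_reps_def)

lemma PP_same:
  assumes "snd q = snd p" "\<forall>d\<in>snd p. fst q d = fst p d"
  shows "PP X q = PP X p"
  using assms unfolding PP_def by (auto simp: fun_eq_iff)

lemma iso_refl:
  assumes "p \<in> IM_reps X Q" "Q \<subseteq> topspace X"
  shows "IM_isotopic X p p"
  using reps_D[OF assms] homeomorphic_imp_continuous_map
  by (auto simp: iso_iff PP_def)

lemma iso_prop:
  assumes "p \<in> IM_reps X Q" "Q \<subseteq> topspace X" "IM_isotopic X p q"
  shows "snd q = snd p" "\<forall>d\<in>snd p. fst q d = fst p d" "PP X q = PP X p"
proof -
  have h: "snd p = snd q" "homotopic_with (PP X p) X X (fst p) (fst q)"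
    using assms reps_D[OF assms(1,2)] by (auto simp: iso_iff)
  then have "PP X p (fst q)" using homotopic_with_imp_property by blast
  then show "\<forall>d\<in>snd p. fst q d = fst p d" by (simp add: PP_def)
  then show "PP X q = PP X p" using h by (intro PP_same) auto
  show "snd q = snd p" using h by simp
qed

lemma iso_sym:
  assumes "p \<in> IM_reps X Q" "q \<in> IM_reps X Q" "Q \<subseteq> topspace X" "IM_isotopic X p q"
  shows "IM_isotopic X q p"
proof -
  have h: "snd p = snd q" "homotopic_with (PP X p) X X (fst p) (fst q)"
    using assms reps_D[OF assms(1,3)] by (auto simp: iso_iff)
  have "PP X q = PP X p" using iso_prop[OF assms(1,3,4)] by simp
  then show ?thesis using h reps_D[OF assms(2,3)] homotopic_with_sym by (metis iso_iff)
qed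

lemma iso_trans:
  assumes "p \<in> IM_reps X Q" "q \<in> IM_reps X Q" "Q \<subseteq> topspace X" "IM_isotopic X p q"
    "IM_isotopic X q r"
  shows "IM_isotopic X p r"
proof -
  have h: "snd p = snd q" "homotopic_with (PP X p) X X (fst p) (fst q)"
    using assms reps_D[OF assms(1,3)] by (auto simp: iso_iff)
  have e: "PP X q = PP X p" using iso_prop[OF assms(1,3,4)] by simp
  have h2: "snd q = snd r" "homotopic_with (PP X q) X X (fst q) (fst r)"
    using assms reps_D[OF assms(2,3)] by (auto simp: iso_iff)
  show ?thesis using h h2 e reps_D[OF assms(1,3)] homotopic_with_trans by (metis iso_iff)
qed

lemma comp_reps:
  assumes "p \<in> IM_reps X Q" "q \<in> IM_reps X Q"
  shows "IM_comp p q \<in> IM_reps X Q"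
  using assms unfolding IM_reps_def IM_comp_def
  by (auto intro: homeomorphic_map_compose)

lemma iso_comp_left:
  assumes "p \<in> IM_reps X Q" "q \<in> IM_reps X Q" "Q \<subseteq> topspace X" "IM_isotopic X p p'"
  shows "IM_isotopic X (IM_comp p q) (IM_comp p' q)"
proof -
  have h: "snd p = snd p'" "homotopic_with (PP X p) X X (fst p) (fst p')"
    using assms reps_D[OF assms(1,3)] by (auto simp: iso_iff)
  have sc: "snd (IM_comp p q) \<subseteq> topspace X"
    using reps_D[OF comp_reps[OF assms(1,2)] assms(3)] by blast
  have "homotopic_with (PP X (IM_comp p q)) X X (fst p \<circ> fst q) (fst p' \<circ> fst q)"
  proof (rule homotopic_with_compose_continuous_map_right[OF h(2)])
    show "continuous_map X X (fst q)"
      using reps_D[OF assms(2,3)] homeomorphic_imp_continuous_map by blast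
    fix j assume "PP X p j"
    then show "PP X (IM_comp p q) (j \<circ> fst q)"
      using reps_D[OF assms(2,3)] unfolding PP_def IM_comp_def
      by (auto intro: homeomorphic_map_compose)
  qed
  then show ?thesis using h sc by (simp add: iso_iff IM_comp_def)
qed

lemma iso_comp_right:
  assumes "p \<in> IM_reps X Q" "q \<in> IM_reps X Q" "Q \<subseteq> topspace X" "IM_isotopic X q q'"
  shows "IM_isotopic X (IM_comp p q) (IM_comp p q')"
proof -
  have h: "snd q = snd q'" "homotopic_with (PP X q) X X (fst q) (fst q')"
    using assms reps_D[OF assms(2,3)] by (auto simp: iso_iff)
  have agree: "\<forall>d\<in>snd q. fst q' d = fst q d" using iso_prop[OF assms(2,3,4)] by simp
  have sc: "snd (IM_comp p q) \<subseteq> topspace X"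
    using reps_D[OF comp_reps[OF assms(1,2)] assms(3)] by blast
  have "homotopic_with (PP X (IM_comp p q)) X X (fst p \<circ> fst q) (fst p \<circ> fst q')"
  proof (rule homotopic_with_compose_continuous_map_left[OF h(2)])
    show "continuous_map X X (fst p)"
      using reps_D[OF assms(1,3)] homeomorphic_imp_continuous_map by blast
    fix j assume "PP X q j"
    then show "PP X (IM_comp p q) (fst p \<circ> j)"
      using reps_D[OF assms(1,3)] unfolding PP_def IM_comp_def
      by (auto intro: homeomorphic_map_compose)
  qed
  moreover have "snd (IM_comp p q) = snd (IM_comp p q')"
    using h(1) agree by (auto simp: IM_comp_def)
  ultimately show ?thesis using sc by (simp add: iso_iff IM_comp_def)
qed

lemma in_cls:
  assumes "p \<in> IM_reps X Q" "Q \<subseteq> topspace X"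
  shows "p \<in> IM_class X Q p"
  using iso_refl[OF assms] assms by (simp add: IM_class_def)

lemma cls_eq:
  assumes "p \<in> IM_reps X Q" "q \<in> IM_reps X Q" "Q \<subseteq> topspace X" "IM_isotopic X p q"
  shows "IM_class X Q p = IM_class X Q q"
proof -
  have qp: "IM_isotopic X q p" by (rule iso_sym[OF assms])
  show ?thesis unfolding IM_class_def
  proof (intro Collect_cong conj_cong refl iffI)
    fix r assume "r \<in> IM_reps X Q" "IM_isotopic X p r"
    then show "IM_isotopic X q r" using iso_trans[OF assms(2,1,3) qp] by blast
  next
    fix r assume "r \<in> IM_reps X Q" "IM_isotopic X q r"
    then show "IM_isotopic X p r" using iso_trans[OF assms(1,2,3,4)] by blast
  qed
qed

lemma cls_eq_iff:
  assumes "p \<in> IM_reps X Q" "q \<in> IM_reps X Q" "Q \<subseteq> topspace X"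
  shows "IM_class X Q p = IM_class X Q q \<longleftrightarrow> IM_isotopic X p q"
proof
  assume "IM_class X Q p = IM_class X Q q"
  then have "q \<in> IM_class X Q p" using in_cls[OF assms(2,3)] by simp
  then show "IM_isotopic X p q" by (simp add: IM_class_def)
qed (rule cls_eq[OF assms])

lemma some_cls:
  assumes "p \<in> IM_reps X Q" "Q \<subseteq> topspace X"
  shows "(SOME a. a \<in> IM_class X Q p) \<in> IM_reps X Q \<and> IM_isotopic X p (SOME a. a \<in> IM_class X Q p)"
proof -
  have "(SOME a. a \<in> IM_class X Q p) \<in> IM_class X Q p" using in_cls[OF assms] by (rule someI)
  then show ?thesis by (simp add: IM_class_def)
qed

lemma mult_cls:
  assumes "p \<in> IM_reps X Q" "q \<in> IM_reps X Q" "Q \<subseteq> topspace X"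
  shows "IM_class X Q p \<otimes>\<^bsub>IM X Q\<^esub> IM_class X Q q = IM_class X Q (IM_comp p q)"
proof -
  define a where "a = (SOME a. a \<in> IM_class X Q p)"
  define b where "b = (SOME a. a \<in> IM_class X Q q)"
  have a: "a \<in> IM_reps X Q" "IM_isotopic X p a" using some_cls[OF assms(1,3)] a_def by auto
  have b: "b \<in> IM_reps X Q" "IM_isotopic X q b" using some_cls[OF assms(2,3)] b_def by auto
  have "IM_isotopic X (IM_comp p q) (IM_comp a q)" by (rule iso_comp_left[OF assms(1,2,3) a(2)])
  moreover have "IM_isotopic X (IM_comp a q) (IM_comp a b)" by (rule iso_comp_right[OF a(1) assms(2,3) b(2)])
  ultimately have "IM_isotopic X (IM_comp p q) (IM_comp a b)"
    by (rule iso_trans[OF comp_reps[OF assms(1,2)] comp_reps[OF a(1) assms(2)] assms(3)])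
  then have "IM_class X Q (IM_comp a b) = IM_class X Q (IM_comp p q)"
    by (rule cls_eq[OF comp_reps[OF a(1) b(1)] comp_reps[OF assms(1,2)] assms(3)
       iso_sym[OF comp_reps[OF assms(1,2)] comp_reps[OF a(1) b(1)] assms(3)]])
  then show ?thesis by (simp add: IM_def a_def b_def)
qed

lemma one_reps:
  assumes "Q \<subseteq> topspace X"
  shows "(\<lambda>x. x, Q) \<in> IM_reps X Q"
  using homeomorphic_map_id[of X X] by (simp add: IM_reps_def id_def)

lemma IM_monoid:
  assumes "Q \<subseteq> topspace X"
  shows "monoid (IM X Q)"
proof (rule monoidI)
  fix x y assume "x \<in> carrier (IM X Q)" "y \<in> carrier (IM X Q)"
  then obtain p q where "p \<in> IM_reps X Q" "q \<in> IM_reps X Q" "x = IM_class X Q p" "y = IM_class X Q q"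
    by (auto simp: IM_def)
  then show "x \<otimes>\<^bsub>IM X Q\<^esub> y \<in> carrier (IM X Q)"
    using mult_cls[OF _ _ assms] comp_reps[of p X Q q] by (auto simp: IM_def)
next
  show "\<one>\<^bsub>IM X Q\<^esub> \<in> carrier (IM X Q)" using one_reps[OF assms] by (auto simp: IM_def)
next
  fix x y z assume "x \<in> carrier (IM X Q)" "y \<in> carrier (IM X Q)" "z \<in> carrier (IM X Q)"
  then obtain p q r where pqr: "p \<in> IM_reps X Q" "q \<in> IM_reps X Q" "r \<in> IM_reps X Q"
    "x = IM_class X Q p" "y = IM_class X Q q" "z = IM_class X Q r"
    by (auto simp: IM_def)
  have "IM_comp (IM_comp p q) r = IM_comp p (IM_comp q r)"
    by (auto simp: IM_comp_def)
  then show "x \<otimes>\<^bsub>IM X Q\<^esub> y \<otimes>\<^bsub>IM X Q\<^esub> z = x \<otimes>\<^bsub>IM X Q\<^esub> (y \<otimes>\<^bsub>IM X Q\<^esub> z)"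
    unfolding pqr(4-6)
    by (simp add: mult_cls[OF pqr(1,2) assms] mult_cls[OF pqr(2,3) assms]
      mult_cls[OF comp_reps[OF pqr(1,2)] pqr(3) assms] mult_cls[OF pqr(1) comp_reps[OF pqr(2,3)] assms])
next
  fix x assume "x \<in> carrier (IM X Q)"
  then obtain p where p: "p \<in> IM_reps X Q" "x = IM_class X Q p" by (auto simp: IM_def)
  have o: "\<one>\<^bsub>IM X Q\<^esub> = IM_class X Q (\<lambda>x. x, Q)" by (simp add: IM_def)
  have "IM_comp (\<lambda>x. x, Q) p = p" using p(1) by (auto simp: IM_comp_def IM_reps_def)
  then show "\<one>\<^bsub>IM X Q\<^esub> \<otimes>\<^bsub>IM X Q\<^esub> x = x"
    using o p mult_cls[OF one_reps[OF assms] p(1) assms] by simp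
  have "IM_comp p (\<lambda>x. x, Q) = p" using p(1) by (auto simp: IM_comp_def IM_reps_def)
  then show "x \<otimes>\<^bsub>IM X Q\<^esub> \<one>\<^bsub>IM X Q\<^esub> = x"
    using o p mult_cls[OF p(1) one_reps[OF assms] assms] by simp
qed

lemma iso_eqI:
  assumes "p \<in> IM_reps X Q" "Q \<subseteq> topspace X" "snd q = snd p"
    "\<And>x. x \<in> topspace X \<Longrightarrow> fst q x = fst p x"
  shows "IM_isotopic X p q"
proof -
  have st: "snd p \<subseteq> topspace X" using reps_D[OF assms(1,2)] by blast
  have "homotopic_with (PP X p) X X (fst p) (fst p)"
    using iso_iff[OF st] iso_refl[OF assms(1,2)] by blast
  then have "homotopic_with (PP X p) X X (fst p) (fst q)"
    by (rule homotopic_with_eq[OF _ _ _ PP_inv[OF st]]) (auto simp: assms(4))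
  then show ?thesis using iso_iff[OF st] assms(3) by simp
qed

lemma hmaps_facts:
  assumes "homeomorphic_maps X X f g"
  shows "homeomorphic_map X X g" "\<And>x. x \<in> topspace X \<Longrightarrow> g (f x) = x"
    "\<And>x. x \<in> topspace X \<Longrightarrow> f (g x) = x"
    "\<And>x. x \<in> topspace X \<Longrightarrow> f x \<in> topspace X"
    "\<And>x. x \<in> topspace X \<Longrightarrow> g x \<in> topspace X"
    "continuous_map X X g"
proof -
  show g: "homeomorphic_map X X g" using assms unfolding homeomorphic_maps_map by blast
  show "continuous_map X X g" using homeomorphic_imp_continuous_map[OF g] .
  show "\<And>x. x \<in> topspace X \<Longrightarrow> g (f x) = x" "\<And>x. x \<in> topspace X \<Longrightarrow> f (g x) = x"
    using assms unfolding homeomorphic_maps_map by blast+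
  show "\<And>x. x \<in> topspace X \<Longrightarrow> f x \<in> topspace X" "\<And>x. x \<in> topspace X \<Longrightarrow> g x \<in> topspace X"
    using assms unfolding homeomorphic_maps_def continuous_map_def by blast+
qed

theorem mainTheorem5:
  fixes X :: "'a topology" and Q :: "'a set" and g b n :: nat
  assumes "is_surface g b X"
    and "Q \<subseteq> topspace X - mfd_boundary X" and "finite Q" and "card Q = n"
  shows "monoid (IM X Q) \<and>
         (\<forall>a\<in>carrier (IM X Q). \<exists>!c. c \<in> carrier (IM X Q) \<and>
             a \<otimes>\<^bsub>IM X Q\<^esub> c \<otimes>\<^bsub>IM X Q\<^esub> a = a \<and>
             c \<otimes>\<^bsub>IM X Q\<^esub> a \<otimes>\<^bsub>IM X Q\<^esub> c = c)"
proof -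
  have Qt: "Q \<subseteq> topspace X" using assms(2) by blast
  have M: "monoid (IM X Q)" by (rule IM_monoid[OF Qt])
  have "\<exists>!c. c \<in> carrier (IM X Q) \<and>
             a \<otimes>\<^bsub>IM X Q\<^esub> c \<otimes>\<^bsub>IM X Q\<^esub> a = a \<and>
             c \<otimes>\<^bsub>IM X Q\<^esub> a \<otimes>\<^bsub>IM X Q\<^esub> c = c" if a: "a \<in> carrier (IM X Q)" for a
  proof -
    obtain f D where p: "(f, D) \<in> IM_reps X Q" and aeq: "a = IM_class X Q (f, D)"
      using a by (auto simp: IM_def)
    have fh: "homeomorphic_map X X f" and fb: "\<forall>x\<in>mfd_boundary X. f x = x"
      and DQ: "D \<subseteq> Q" and fDQ: "f ` D \<subseteq> Q"
      using p by (auto simp: IM_reps_def)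
    have Dt: "D \<subseteq> topspace X" using DQ Qt by blast
    obtain gi where gi: "homeomorphic_maps X X f gi" using fh homeomorphic_map_maps by blast
    note G = hmaps_facts[OF gi]
    have gb: "\<forall>x\<in>mfd_boundary X. gi x = x"
      using fb G(2) bdry_sub by (metis subsetD)
    have gfD: "gi ` f ` D = D" using G(2) Dt by (force simp: image_image)
    define c0 where "c0 = (gi, f ` D)"
    have c0: "c0 \<in> IM_reps X Q"
      using G(1) gb fDQ gfD DQ by (simp add: c0_def IM_reps_def)
    have fin: "finite Q" by (rule assms(3))
    show ?thesis
    proof (rule ex1I[where a = "IM_class X Q c0"])
      have "a \<otimes>\<^bsub>IM X Q\<^esub> IM_class X Q c0 \<otimes>\<^bsub>IM X Q\<^esub> a
          = IM_class X Q (IM_comp (IM_comp (f, D) c0) (f, D))"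
        unfolding aeq by (simp add: mult_cls[OF p c0 Qt] mult_cls[OF comp_reps[OF p c0] p Qt])
      also have "\<dots> = a"
      proof -
        have "IM_isotopic X (f, D) (IM_comp (IM_comp (f, D) c0) (f, D))"
          by (rule iso_eqI[OF p Qt]) (use G(2) Dt in \<open>auto simp: IM_comp_def c0_def\<close>)
        then show ?thesis unfolding aeq
          using cls_eq[OF p comp_reps[OF comp_reps[OF p c0] p] Qt] by simp
      qed
      finally have 1: "a \<otimes>\<^bsub>IM X Q\<^esub> IM_class X Q c0 \<otimes>\<^bsub>IM X Q\<^esub> a = a" .
      have "IM_class X Q c0 \<otimes>\<^bsub>IM X Q\<^esub> a \<otimes>\<^bsub>IM X Q\<^esub> IM_class X Q c0
          = IM_class X Q (IM_comp (IM_comp c0 (f, D)) c0)"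
        unfolding aeq by (simp add: mult_cls[OF c0 p Qt] mult_cls[OF comp_reps[OF c0 p] c0 Qt])
      also have "\<dots> = IM_class X Q c0"
      proof -
        have "IM_isotopic X c0 (IM_comp (IM_comp c0 (f, D)) c0)"
          by (rule iso_eqI[OF c0 Qt]) (use G(2,3,5) Dt in \<open>auto simp: IM_comp_def c0_def\<close>)
        then show ?thesis
          using cls_eq[OF c0 comp_reps[OF comp_reps[OF c0 p] c0] Qt] by simp
      qed
      finally have 2: "IM_class X Q c0 \<otimes>\<^bsub>IM X Q\<^esub> a \<otimes>\<^bsub>IM X Q\<^esub> IM_class X Q c0 = IM_class X Q c0" .
      show "IM_class X Q c0 \<in> carrier (IM X Q) \<and>
             a \<otimes>\<^bsub>IM X Q\<^esub> IM_class X Q c0 \<otimes>\<^bsub>IM X Q\<^esub> a = a \<and>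
             IM_class X Q c0 \<otimes>\<^bsub>IM X Q\<^esub> a \<otimes>\<^bsub>IM X Q\<^esub> IM_class X Q c0 = IM_class X Q c0"
        using 1 2 c0 by (simp add: IM_def)
    next
      fix c assume c: "c \<in> carrier (IM X Q) \<and>
             a \<otimes>\<^bsub>IM X Q\<^esub> c \<otimes>\<^bsub>IM X Q\<^esub> a = a \<and>
             c \<otimes>\<^bsub>IM X Q\<^esub> a \<otimes>\<^bsub>IM X Q\<^esub> c = c"
      then obtain h S where q: "(h, S) \<in> IM_reps X Q" and ceq: "c = IM_class X Q (h, S)"
        by (auto simp: IM_def)
      have hh: "homeomorphic_map X X h" and SQ: "S \<subseteq> Q"
        using q by (auto simp: IM_reps_def)
      have St: "S \<subseteq> topspace X" using SQ Qt by blast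
      have r1: "IM_class X Q (IM_comp (IM_comp (f, D) (h, S)) (f, D)) = IM_class X Q (f, D)"
        using c unfolding aeq ceq
        by (simp add: mult_cls[OF p q Qt] mult_cls[OF comp_reps[OF p q] p Qt])
      have r2: "IM_class X Q (IM_comp (IM_comp (h, S) (f, D)) (h, S)) = IM_class X Q (h, S)"
        using c unfolding aeq ceq
        by (simp add: mult_cls[OF q p Qt] mult_cls[OF comp_reps[OF q p] q Qt])
      have i1: "IM_isotopic X (IM_comp (IM_comp (f, D) (h, S)) (f, D)) (f, D)"
        using r1 cls_eq_iff[OF comp_reps[OF comp_reps[OF p q] p] p Qt] by simp
      have i2: "IM_isotopic X (IM_comp (IM_comp (h, S) (f, D)) (h, S)) (h, S)"
        using r2 cls_eq_iff[OF comp_reps[OF comp_reps[OF q p] q] q Qt] by simp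
      have i1': "IM_isotopic X (f, D) (IM_comp (IM_comp (f, D) (h, S)) (f, D))"
        by (rule iso_sym[OF comp_reps[OF comp_reps[OF p q] p] p Qt i1])
      have i2': "IM_isotopic X (h, S) (IM_comp (IM_comp (h, S) (f, D)) (h, S))"
        by (rule iso_sym[OF comp_reps[OF comp_reps[OF q p] q] q Qt i2])
      have s1: "D = {d \<in> D. f d \<in> S \<and> h (f d) \<in> D}"
        using iso_prop(1)[OF p Qt i1'] by (auto simp: IM_comp_def)
      have s2: "S = {s \<in> S. h s \<in> D \<and> f (h s) \<in> S}"
        using iso_prop(1)[OF q Qt i2'] by (auto simp: IM_comp_def)
      have fDS: "f ` D \<subseteq> S" using s1 by blast
      have hSD: "h ` S \<subseteq> D" using s2 by blast
      have finS: "finite S" using SQ fin finite_subset by blast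
      have finD: "finite D" using DQ fin finite_subset by blast
      have injf: "inj_on f D" using homeomorphic_imp_injective_map[OF fh] Dt inj_on_subset by blast
      have injh: "inj_on h S" using homeomorphic_imp_injective_map[OF hh] St inj_on_subset by blast
      have "card S = card (h ` S)" using card_image[OF injh] by simp
      also have "\<dots> \<le> card D" using card_mono[OF finD hSD] .
      also have "\<dots> = card (f ` D)" using card_image[OF injf] by simp
      finally have "card S \<le> card (f ` D)" .
      then have SfD: "f ` D = S" using card_seteq[OF finS fDS] by simp
      have H1: "homotopic_with (PP X (f, D)) X X ((f \<circ> h) \<circ> f) f"
      proof -
        have "homotopic_with (PP X (f, D)) X X f ((f \<circ> h) \<circ> f)"
          using i1' Dt by (simp add: iso_iff IM_comp_def)
        then show ?thesis by (rule homotopic_with_symD)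
      qed
      have "PP X (f, D) ((f \<circ> h) \<circ> f)" using homotopic_with_imp_property[OF H1] by blast
      then have ffd: "\<forall>d\<in>D. f (h (f d)) = f d" by (simp add: PP_def)
      have hfd: "\<forall>d\<in>D. h (f d) = d"
      proof
        fix d assume d: "d \<in> D"
        have "h (f d) \<in> topspace X" using d fDS hSD Dt by auto
        then have "h (f d) = gi (f (h (f d)))" using G(2) by simp
        also have "\<dots> = d" using ffd d G(2) Dt by auto
        finally show "h (f d) = d" .
      qed
      have H2: "homotopic_with (PP X (h, S)) X X ((gi \<circ> ((f \<circ> h) \<circ> f)) \<circ> gi) ((gi \<circ> f) \<circ> gi)"
      proof (rule homotopic_with_compose_continuous_map_right[where p = "\<lambda>k. PP X (h, S) (k \<circ> gi)"])
        show "homotopic_with (\<lambda>k. PP X (h, S) (k \<circ> gi)) X X (gi \<circ> ((f \<circ> h) \<circ> f)) (gi \<circ> f)"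
        proof (rule homotopic_with_compose_continuous_map_left[OF H1 G(6)])
          fix j assume j: "PP X (f, D) j"
          show "PP X (h, S) ((gi \<circ> j) \<circ> gi)"
            unfolding PP_def
          proof (intro conjI ballI)
            show "homeomorphic_map X X (gi \<circ> j \<circ> gi)"
              using j G(1) by (auto simp: PP_def intro!: homeomorphic_map_compose)
            fix x assume "x \<in> mfd_boundary X"
            then show "(gi \<circ> j \<circ> gi) x = x" using j gb by (simp add: PP_def)
          next
            fix s assume s: "s \<in> snd (h, S)"
            then obtain d where d: "d \<in> D" "s = f d" using SfD by auto
            have "j (gi s) = f d" using j d G(2) Dt by (auto simp: PP_def)
            then show "(gi \<circ> j \<circ> gi) s = fst (h, S) s" using d G(2) Dt hfd by auto
          qed
        qed
      qed (use G(6) in auto)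
      have H3: "homotopic_with (PP X (h, S)) X X h gi"
      proof (rule homotopic_with_eq[OF H2])
        fix x assume x: "x \<in> topspace X"
        have "h x \<in> topspace X"
          using x hh by (auto simp: homeomorphic_map_def quotient_map_def)
        then show "h x = (gi \<circ> (f \<circ> h \<circ> f) \<circ> gi) x" using x G(2,3) by simp
        show "gi x = (gi \<circ> f \<circ> gi) x" using x G(3) by simp
      qed (rule PP_inv[of "(h, S)" X], use St in auto)
      have "IM_isotopic X (h, S) c0"
        using H3 St SfD by (simp add: iso_iff c0_def)
      then show "c = IM_class X Q c0" unfolding ceq by (rule cls_eq[OF q c0 Qt])
    qed
  qed
  then show ?thesis using M by blast
qed

end
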